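(* In a multi-channel single-hop radio network with $b$ channels in which at most $k$ stations are activated spontaneously (at arbitrary times), the randomized algorithm Channel-Screening — in which, in every round, each active station independently for each channel $\beta\in\{1,\dots,b\}$ transmits on channel $\beta$ with probability $k^{-\beta/b}$, until a message is heard on some channel — wakes up the network within $\mathcal O(k^{1/b}\ln\frac{1}{\epsilon})$ time steps (counted from the first spontaneous activation) with probability at least $1-\epsilon$, for every $0<\epsilon<1$.
   Context: Model: $n$ stations and $b$ channels numbered $1,\dots,b$; time is divided into synchronous rounds; each active station may transmit on any subset of channels per round and all stations listen to all channels. A message on a channel in a round is heard by all stations iff exactly one station transmits on that channel in that round; there is no collision detection. Initially all stations are passive; at most $k$ stations become active spontaneously at arbitrary time steps; $k$ and $b$ are known, $n$ need not be. The network is woken up at the first time step at which some channel carries a transmission of exactly one station. All random choices are independent. *)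

theory Defs
  imports "HOL-Probability.Probability"
begin

text \<open>Stations are identified by natural numbers; S is the (finite) set of stations that
  ever become active spontaneously, and a s is the activation round of station s.
  Passive stations never transmit, so only stations in S matter.\<close>

definition cs_prob :: "nat \<Rightarrow> nat \<Rightarrow> nat \<Rightarrow> real" where
  "cs_prob k b \<beta> = real k powr (- real \<beta> / real b)"

text \<open>All random choices: one independent coin per (station, round, channel), for the
  rounds 0..<N. Coin true = the station transmits on that channel in that round
  (if it is active then).\<close>
definition coin_space :: "nat set \<Rightarrow> nat \<Rightarrow> nat \<Rightarrow> nat \<Rightarrow> (nat \<times> nat \<times> nat \<Rightarrow> bool) pmf" where
  "coin_space S N k b =
     Pi_pmf (S \<times> {..<N} \<times> {1..b}) False (\<lambda>(s, t, \<beta>). bernoulli_pmf (cs_prob k b \<beta>))"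

definition transmits :: "(nat \<Rightarrow> nat) \<Rightarrow> (nat \<times> nat \<times> nat \<Rightarrow> bool) \<Rightarrow> nat \<Rightarrow> nat \<Rightarrow> nat \<Rightarrow> bool" where
  "transmits a \<omega> s t \<beta> \<longleftrightarrow> a s \<le> t \<and> \<omega> (s, t, \<beta>)"

definition heard :: "nat set \<Rightarrow> (nat \<Rightarrow> nat) \<Rightarrow> (nat \<times> nat \<times> nat \<Rightarrow> bool) \<Rightarrow> nat \<Rightarrow> nat \<Rightarrow> bool" where
  "heard S a \<omega> t \<beta> \<longleftrightarrow> card {s \<in> S. transmits a \<omega> s t \<beta>} = 1"

definition first_act :: "nat set \<Rightarrow> (nat \<Rightarrow> nat) \<Rightarrow> nat" where
  "first_act S a = Min (a ` S)"

definition woken_within :: "nat set \<Rightarrow> (nat \<Rightarrow> nat) \<Rightarrow> nat \<Rightarrow> nat \<Rightarrow> (nat \<times> nat \<times> nat \<Rightarrow> bool) \<Rightarrow> bool" where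
  "woken_within S a b T \<omega> \<longleftrightarrow>
     (\<exists>t \<in> {first_act S a..<first_act S a + T}. \<exists>\<beta> \<in> {1..b}. heard S a \<omega> t \<beta>)"

end

theory Submission
  imports Defs
begin


definition dep :: "('i \<Rightarrow> 'v) set \<Rightarrow> 'i set \<Rightarrow> bool" where
  "dep X G \<longleftrightarrow> (\<forall>f g. (\<forall>x\<in>G. f x = g x) \<longrightarrow> (f \<in> X \<longleftrightarrow> g \<in> X))"

lemma pair_prob_times:
  "measure_pmf.prob (pair_pmf M N) (X \<times> Y) = measure_pmf.prob M X * measure_pmf.prob N Y"
proof -
  have "measure_pmf.prob (pair_pmf M N) (X \<times> Y) =
        measure_pmf.prob (pair_pmf M N) ((X \<times> Y) \<inter> set_pmf (pair_pmf M N))"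
    by (rule measure_Int_set_pmf[symmetric])
  also have "(X \<times> Y) \<inter> set_pmf (pair_pmf M N) = (X \<inter> set_pmf M) \<times> (Y \<inter> set_pmf N)"
    by auto
  also have "measure_pmf.prob (pair_pmf M N) \<dots> =
      measure_pmf.prob M (X \<inter> set_pmf M) * measure_pmf.prob N (Y \<inter> set_pmf N)"
    by (rule measure_pmf_prob_product) (auto intro: countable_subset)
  finally show ?thesis by (simp add: measure_Int_set_pmf)
qed

lemma dep_D: "dep Y H \<Longrightarrow> (\<And>x. x \<in> H \<Longrightarrow> f x = g x) \<Longrightarrow> (f \<in> Y \<longleftrightarrow> g \<in> Y)"
  unfolding dep_def by blast

lemma split_prob:
  assumes "finite A" "G \<subseteq> A" "dep X G" "dep Y (A - G)"
  shows "measure_pmf.prob (Pi_pmf A d p) (X \<inter> Y) =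
         measure_pmf.prob (Pi_pmf G d p) X * measure_pmf.prob (Pi_pmf (A - G) d p) Y"
proof -
  have fG: "finite G" using assms finite_subset by blast
  have AU: "A = G \<union> (A - G)" using assms by blast
  let ?h = "\<lambda>(f,g) x. if x \<in> G then f x else g x"
  have "Pi_pmf A d p = map_pmf ?h (pair_pmf (Pi_pmf G d p) (Pi_pmf (A - G) d p))"
    by (subst AU, rule Pi_pmf_union) (use fG assms in auto)
  moreover have "?h -` (X \<inter> Y) = X \<times> Y"
  proof (intro set_eqI iffI)
    fix z assume z: "z \<in> ?h -` (X \<inter> Y)"
    obtain f g where zz: "z = (f,g)" by force
    have "?h (f,g) \<in> X" "?h (f,g) \<in> Y" using z zz by auto
    moreover have "?h (f,g) \<in> X \<longleftrightarrow> f \<in> X" by (rule dep_D[OF assms(3)]) auto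
    moreover have "?h (f,g) \<in> Y \<longleftrightarrow> g \<in> Y" by (rule dep_D[OF assms(4)]) auto
    ultimately show "z \<in> X \<times> Y" using zz by auto
  next
    fix z assume z: "z \<in> X \<times> Y"
    obtain f g where zz: "z = (f,g)" by force
    have "?h (f,g) \<in> X \<longleftrightarrow> f \<in> X" by (rule dep_D[OF assms(3)]) auto
    moreover have "?h (f,g) \<in> Y \<longleftrightarrow> g \<in> Y" by (rule dep_D[OF assms(4)]) auto
    ultimately show "z \<in> ?h -` (X \<inter> Y)" using zz z by auto
  qed
  ultimately show ?thesis by (simp add: pair_prob_times)
qed

lemma dep_UNIV: "dep UNIV G" by (simp add: dep_def)

lemma dep_Inter:
  fixes E :: "'j \<Rightarrow> ('a \<Rightarrow> 'v) set"
  assumes "\<And>i. i \<in> J \<Longrightarrow> dep (E i) (G i)" "\<And>i. i \<in> J \<Longrightarrow> G i \<subseteq> H"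
  shows "dep (\<Inter>i\<in>J. E i) H"
  unfolding dep_def
proof (intro allI impI)
  fix f g :: "'a \<Rightarrow> 'v" assume fg: "\<forall>x\<in>H. f x = g x"
  have "\<forall>i\<in>J. (f \<in> E i \<longleftrightarrow> g \<in> E i)"
  proof
    fix i assume i: "i \<in> J"
    hence "\<forall>x\<in>G i. f x = g x" using fg assms(2) by blast
    thus "f \<in> E i \<longleftrightarrow> g \<in> E i" using assms(1)[OF i] unfolding dep_def by blast
  qed
  thus "f \<in> (\<Inter>i\<in>J. E i) \<longleftrightarrow> g \<in> (\<Inter>i\<in>J. E i)" by blast
qed

lemma indep_groups:
  assumes "finite A" "finite J" "\<And>j. j \<in> J \<Longrightarrow> G j \<subseteq> A"
    "\<And>i j. i \<in> J \<Longrightarrow> j \<in> J \<Longrightarrow> i \<noteq> j \<Longrightarrow> G i \<inter> G j = {}"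
    "\<And>j. j \<in> J \<Longrightarrow> dep (E j) (G j)"
  shows "measure_pmf.prob (Pi_pmf A d p) (\<Inter>j\<in>J. E j) = (\<Prod>j\<in>J. measure_pmf.prob (Pi_pmf A d p) (E j))"
  using assms(2-5)
proof (induction J rule: finite_induct)
  case empty
  then show ?case by simp
next
  case (insert j J)
  let ?R = "\<Inter>i\<in>J. E i"
  have Gj: "G j \<subseteq> A" using insert by auto
  have depR: "dep ?R (A - G j)"
  proof (rule dep_Inter)
    fix i assume i: "i \<in> J"
    show "dep (E i) (G i)" using insert.prems(3) i by auto
    show "G i \<subseteq> A - G j" using insert.prems(1,2)[of i] insert.prems(2)[of i j] i insert.hyps by auto
  qed
  have depj: "dep (E j) (G j)" using insert by auto
  have IH: "measure_pmf.prob (Pi_pmf A d p) ?R = (\<Prod>i\<in>J. measure_pmf.prob (Pi_pmf A d p) (E i))"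
    using insert by auto
  have "measure_pmf.prob (Pi_pmf A d p) (\<Inter>i\<in>insert j J. E i) = measure_pmf.prob (Pi_pmf A d p) (E j \<inter> ?R)"
    by simp
  also have "\<dots> = measure_pmf.prob (Pi_pmf (G j) d p) (E j) * measure_pmf.prob (Pi_pmf (A - G j) d p) ?R"
    by (rule split_prob[OF assms(1) Gj depj depR])
  also have "measure_pmf.prob (Pi_pmf (G j) d p) (E j) = measure_pmf.prob (Pi_pmf A d p) (E j \<inter> UNIV)"
    using split_prob[OF assms(1) Gj depj dep_UNIV] by simp
  also have "measure_pmf.prob (Pi_pmf (A - G j) d p) ?R = measure_pmf.prob (Pi_pmf A d p) (UNIV \<inter> ?R)"
    using split_prob[OF assms(1) Gj dep_UNIV depR] by simp
  finally show ?case using IH insert.hyps by simp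
qed



lemma pow_bound:
  fixes p :: real and m :: nat
  assumes "0 \<le> p" "p \<le> 1 / real m" "1 \<le> m"
  shows "exp (-1) \<le> (1 - p) ^ (m - 1)"
proof (cases "m = 1")
  case True then show ?thesis by simp
next
  case False
  then obtain n where n: "m = n + 1" "1 \<le> n" using assms(3)
    by (metis add.commute le_add1 less_one nat_neq_iff not_less_eq_eq plus_1_eq_Suc
        less_imp_Suc_add)
  have "1 - 1 / real m \<le> 1 - p" using assms by simp
  moreover have "0 \<le> 1 - 1 / real m" using assms by (simp add: field_simps)
  ultimately have A: "(1 - 1 / real m) ^ (m - 1) \<le> (1 - p) ^ (m - 1)" by (rule power_mono)
  have "1 + 1 / real n \<le> exp (1 / real n)" by (rule exp_ge_add_one_self)
  hence "(1 + 1 / real n) ^ n \<le> exp (1 / real n) ^ n"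
    by (rule power_mono) (simp add: add_nonneg_nonneg)
  also have "exp (1 / real n) ^ n = exp 1"
    using n by (simp add: exp_of_nat_mult[symmetric])
  finally have B: "(1 + 1 / real n) ^ n \<le> exp 1" .
  have C: "1 - 1 / real m = inverse (1 + 1 / real n)"
    using n by (simp add: field_simps)
  have "exp (-1::real) = inverse (exp 1)" by (rule exp_minus)
  also have "\<dots> \<le> inverse ((1 + 1 / real n) ^ n)"
  proof (rule le_imp_inverse_le[OF B])
    show "0 < (1 + 1 / real n) ^ n" by (intro zero_less_power) (simp add: add_pos_nonneg)
  qed
  also have "\<dots> = (1 - 1 / real m) ^ (m - 1)" using n C by (simp add: power_inverse)
  finally show ?thesis using A by linarith
qed

lemma choose_beta:
  fixes k b m :: nat
  assumes "1 \<le> k" "1 \<le> b" "1 \<le> m" "m \<le> k"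
  shows "\<exists>\<beta>\<in>{1..b}. real k powr (- real \<beta> / real b) \<le> 1 / real m \<and>
           real k powr (- (1 / real b)) \<le> real m * real k powr (- real \<beta> / real b)"
proof -
  have kpos: "0 < real k" using assms by simp
  define P where "P \<beta> \<longleftrightarrow> real m \<le> real k powr (real \<beta> / real b)" for \<beta> :: nat
  have Pb: "P b" unfolding P_def using assms by simp
  define \<beta>0 where "\<beta>0 = (LEAST \<beta>. P \<beta>)"
  have P0: "P \<beta>0" unfolding \<beta>0_def by (rule LeastI[of P b, OF Pb])
  have le: "\<beta>0 \<le> b" using Pb unfolding \<beta>0_def by (rule Least_le)
  have inv: "real k powr (- x) = 1 / real k powr x" for x
    by (simp add: powr_minus divide_inverse)
  show ?thesis
  proof (cases "\<beta>0 = 0")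
    case True
    with P0 have "real m \<le> 1" unfolding P_def using kpos by simp
    hence m1: "m = 1" using assms by simp
    have "real k powr (- real 1 / real b) \<le> real k powr 0"
      using assms by (intro powr_mono) auto
    then show ?thesis using m1 assms by (intro bexI[of _ 1]) auto
  next
    case False
    have nP: "\<not> P (\<beta>0 - 1)" unfolding \<beta>0_def
      using False not_less_Least[of "\<beta>0 - 1" P] \<beta>0_def by auto
    have r: "real (\<beta>0 - 1) = real \<beta>0 - 1" using False by simp
    have 1: "real k powr (- real \<beta>0 / real b) \<le> 1 / real m"
    proof -
      have "real k powr (- real \<beta>0 / real b) = 1 / real k powr (real \<beta>0 / real b)"
        using inv[of "real \<beta>0 / real b"] by simp
      also have "\<dots> \<le> 1 / real m" using P0 assms unfolding P_def
        by (intro divide_left_mono) auto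
      finally show ?thesis .
    qed
    have "real k powr ((real \<beta>0 - 1) / real b) < real m" using nP r unfolding P_def by simp
    hence "real k powr ((real \<beta>0 - 1) / real b) * real k powr (- real \<beta>0 / real b)
           \<le> real m * real k powr (- real \<beta>0 / real b)"
      by (intro mult_right_mono) auto
    also have "real k powr ((real \<beta>0 - 1) / real b) * real k powr (- real \<beta>0 / real b)
        = real k powr (- (1 / real b))"
      by (simp add: powr_add[symmetric] diff_divide_distrib)
    finally show ?thesis using 1 le False by (intro bexI[of _ \<beta>0]) auto
  qed
qed



lemma cs_prob_bounds:
  assumes "1 \<le> k" "1 \<le> \<beta>"
  shows "0 \<le> cs_prob k b \<beta>" "cs_prob k b \<beta> \<le> 1"
proof -
  show "0 \<le> cs_prob k b \<beta>" unfolding cs_prob_def by simp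
  have "real k powr (- real \<beta> / real b) \<le> real k powr 0"
    using assms by (intro powr_mono) (auto simp: divide_nonpos_nonneg)
  thus "cs_prob k b \<beta> \<le> 1" using assms unfolding cs_prob_def by simp
qed

lemma bern_prob:
  assumes "0 \<le> p" "p \<le> 1"
  shows "measure_pmf.prob (bernoulli_pmf p) {True} = p"
        "measure_pmf.prob (bernoulli_pmf p) {False} = 1 - p"
  using assms by (simp_all add: measure_pmf_single)

lemma heard_prob:
  assumes fS: "finite S" and tN: "t < N" and bb: "\<beta> \<in> {1..b}" and k1: "1 \<le> k"
  shows "real (card {s\<in>S. a s \<le> t}) * cs_prob k b \<beta> * (1 - cs_prob k b \<beta>) ^ (card {s\<in>S. a s \<le> t} - 1)
         \<le> measure_pmf.prob (coin_space S N k b) {\<omega>. heard S a \<omega> t \<beta>}"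
proof -
  define Act where "Act = {s\<in>S. a s \<le> t}"
  define p where "p = cs_prob k b \<beta>"
  define I where "I = S \<times> {..<N} \<times> {1..b}"
  define D where "D = (\<lambda>(s::nat, t::nat, \<beta>). bernoulli_pmf (cs_prob k b \<beta>))"
  have P: "coin_space S N k b = Pi_pmf I False D" unfolding coin_space_def I_def D_def by simp
  have fI: "finite I" unfolding I_def using fS by simp
  have fA: "finite Act" unfolding Act_def using fS by simp
  have p0: "0 \<le> p" and p1: "p \<le> 1" unfolding p_def using cs_prob_bounds[OF k1, of \<beta> b] bb by auto
  define B where "B s0 x = (if x = (s0,t,\<beta>) then {True}
      else if x \<in> (Act - {s0}) \<times> {t} \<times> {\<beta>} then {False} else UNIV)" for s0 x
  define R where "R s0 = Pi I (B s0)" for s0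
  have probR: "measure_pmf.prob (Pi_pmf I False D) (R s0) = p * (1 - p) ^ (card Act - 1)"
    if s0: "s0 \<in> Act" for s0
  proof -
    define Z where "Z = (Act - {s0}) \<times> {t} \<times> {\<beta>}"
    define g where "g x = (if x = (s0,t,\<beta>) then p else if x \<in> Z then 1 - p else 1)" for x
    have "measure_pmf.prob (Pi_pmf I False D) (R s0) = (\<Prod>x\<in>I. measure_pmf.prob (D x) (B s0 x))"
      unfolding R_def by (rule measure_Pi_pmf_Pi[OF fI])
    also have "\<dots> = (\<Prod>x\<in>I. g x)"
    proof (rule prod.cong[OF refl])
      fix x assume "x \<in> I"
      show "measure_pmf.prob (D x) (B s0 x) = g x"
      proof (cases "x = (s0,t,\<beta>)")
        case True then show ?thesis using p0 p1
          by (simp add: B_def g_def D_def bern_prob p_def)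
      next
        case F: False
        show ?thesis
        proof (cases "x \<in> Z")
          case True
          then have "snd (snd x) = \<beta>" unfolding Z_def by auto
          then show ?thesis using p0 p1 True F
            by (auto simp add: B_def g_def D_def bern_prob p_def Z_def split: prod.splits)
        next
          case False
          then show ?thesis using F by (simp add: B_def g_def Z_def)
        qed
      qed
    qed
    also have "\<dots> = (\<Prod>x\<in>insert (s0,t,\<beta>) Z. g x)"
    proof (rule prod.mono_neutral_right[OF fI])
      show "insert (s0, t, \<beta>) Z \<subseteq> I" using s0 tN bb unfolding Z_def I_def Act_def by auto
      show "\<forall>i\<in>I - insert (s0, t, \<beta>) Z. g i = 1" unfolding g_def by auto
    qed
    also have "\<dots> = p * (\<Prod>x\<in>Z. g x)"
      using fA by (subst prod.insert) (auto simp: Z_def g_def)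
    also have "(\<Prod>x\<in>Z. g x) = (\<Prod>x\<in>Z. 1 - p)"
      by (rule prod.cong) (auto simp: g_def Z_def)
    also have "\<dots> = (1 - p) ^ card Z" by simp
    also have "card Z = card Act - 1"
      using fA s0 unfolding Z_def by (simp add: card_cartesian_product)
    finally show ?thesis .
  qed
  have sub: "(\<Union>s0\<in>Act. R s0) \<subseteq> {\<omega>. heard S a \<omega> t \<beta>}"
  proof
    fix \<omega> assume "\<omega> \<in> (\<Union>s0\<in>Act. R s0)"
    then obtain s0 where s0: "s0 \<in> Act" and w: "\<omega> \<in> Pi I (B s0)" unfolding R_def by auto
    have "{s \<in> S. transmits a \<omega> s t \<beta>} = {s0}"
    proof (intro set_eqI iffI)
      fix s assume s: "s \<in> {s \<in> S. transmits a \<omega> s t \<beta>}"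
      have xI: "(s,t,\<beta>) \<in> I" using s tN bb unfolding I_def by auto
      show "s \<in> {s0}"
      proof (rule ccontr)
        assume "s \<notin> {s0}"
        hence "(s,t,\<beta>) \<in> (Act - {s0}) \<times> {t} \<times> {\<beta>}" "(s,t,\<beta>) \<noteq> (s0,t,\<beta>)"
          using s unfolding Act_def transmits_def by auto
        hence "B s0 (s,t,\<beta>) = {False}" unfolding B_def by simp
        moreover have "\<omega> (s,t,\<beta>) \<in> B s0 (s,t,\<beta>)" using w xI by (auto simp: Pi_def)
        ultimately have "\<omega> (s,t,\<beta>) \<in> {False}" by simp
        thus False using s unfolding transmits_def by auto
      qed
    next
      fix s assume "s \<in> {s0}"
      hence s: "s = s0" by simp
      have xI: "(s0,t,\<beta>) \<in> I" using s0 tN bb unfolding I_def Act_def by auto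
      have "B s0 (s0,t,\<beta>) = {True}" unfolding B_def by simp
      moreover have "\<omega> (s0,t,\<beta>) \<in> B s0 (s0,t,\<beta>)" using w xI by (auto simp: Pi_def)
      ultimately have "\<omega> (s0,t,\<beta>) \<in> {True}" by simp
      thus "s \<in> {s \<in> S. transmits a \<omega> s t \<beta>}" using s s0 unfolding Act_def transmits_def by auto
    qed
    thus "\<omega> \<in> {\<omega>. heard S a \<omega> t \<beta>}" unfolding heard_def by simp
  qed
  have disj: "disjoint_family_on R Act"
    unfolding disjoint_family_on_def
  proof (intro ballI impI)
    fix s0 s1 assume s0: "s0 \<in> Act" and s1: "s1 \<in> Act" and ne: "s0 \<noteq> s1"
    show "R s0 \<inter> R s1 = {}"
    proof (rule ccontr)
      assume "R s0 \<inter> R s1 \<noteq> {}"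
      then obtain \<omega> where w0: "\<omega> \<in> Pi I (B s0)" and w1: "\<omega> \<in> Pi I (B s1)" unfolding R_def by auto
      have xI: "(s0,t,\<beta>) \<in> I" using s0 tN bb unfolding I_def Act_def by auto
      have "\<omega> (s0,t,\<beta>) \<in> B s0 (s0,t,\<beta>)" by (rule Pi_mem[OF w0 xI])
      moreover have "B s0 (s0,t,\<beta>) = {True}" unfolding B_def by simp
      ultimately have "\<omega> (s0,t,\<beta>) \<in> {True}" by simp
      moreover have "\<omega> (s0,t,\<beta>) \<in> B s1 (s0,t,\<beta>)" by (rule Pi_mem[OF w1 xI])
      moreover have "B s1 (s0,t,\<beta>) = {False}" unfolding B_def using ne s0 by simp
      ultimately have "\<omega> (s0,t,\<beta>) \<in> {True}" "\<omega> (s0,t,\<beta>) \<in> {False}" by simp_all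
      then show False by simp
    qed
  qed
  have "real (card Act) * p * (1 - p) ^ (card Act - 1) = (\<Sum>s0\<in>Act. measure_pmf.prob (Pi_pmf I False D) (R s0))"
    using probR by simp
  also have "\<dots> = measure_pmf.prob (Pi_pmf I False D) (\<Union>s0\<in>Act. R s0)"
    by (rule measure_pmf.finite_measure_finite_Union[symmetric]) (use fA disj in auto)
  also have "\<dots> \<le> measure_pmf.prob (Pi_pmf I False D) {\<omega>. heard S a \<omega> t \<beta>}"
    by (rule measure_pmf.finite_measure_mono[OF sub]) simp
  finally show ?thesis unfolding P Act_def p_def .
qed



theorem theorem2:
  "\<exists>C > 0. \<forall>(S :: nat set) (a :: nat \<Rightarrow> nat) (k :: nat) (b :: nat) (\<epsilon> :: real) (T :: nat).
     finite S \<longrightarrow> S \<noteq> {} \<longrightarrow> card S \<le> k \<longrightarrow> 1 \<le> b \<longrightarrow> 0 < \<epsilon> \<longrightarrow> \<epsilon> < 1 \<longrightarrow>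
     C * real k powr (1 / real b) * ln (1 / \<epsilon>) \<le> real T \<longrightarrow>
     measure_pmf.prob (coin_space S (first_act S a + T) k b) {\<omega>. woken_within S a b T \<omega>}
       \<ge> 1 - \<epsilon>"
proof (intro exI[of _ "exp 1"] conjI allI impI)
  show "0 < (exp 1 :: real)" by simp
  fix S :: "nat set" and a :: "nat \<Rightarrow> nat" and k b :: nat and \<epsilon> :: real and T :: nat
  assume fS: "finite S" and ne: "S \<noteq> {}" and cardk: "card S \<le> k" and b1: "1 \<le> b"
    and e0: "0 < \<epsilon>" and e1: "\<epsilon> < 1"
    and hT: "exp 1 * real k powr (1 / real b) * ln (1 / \<epsilon>) \<le> real T"
  have k1: "1 \<le> k" using cardk fS ne by (metis card_0_eq le_trans less_one not_le)
  have kpos: "0 < real k" using k1 by simp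
  define t0 where "t0 = first_act S a"
  define N where "N = t0 + T"
  define I where "I = S \<times> {..<N} \<times> {1..b}"
  define D where "D = (\<lambda>(s::nat, t::nat, \<beta>). bernoulli_pmf (cs_prob k b \<beta>))"
  define P where "P = coin_space S N k b"
  have PI: "P = Pi_pmf I False D" unfolding P_def coin_space_def I_def D_def by simp
  have fI: "finite I" unfolding I_def using fS by simp
  define F where "F t = {\<omega>. \<forall>\<beta>\<in>{1..b}. \<not> heard S a \<omega> t \<beta>}" for t
  define W where "W = {\<omega>. woken_within S a b T \<omega>}"
  have compl: "UNIV - W = (\<Inter>t\<in>{t0..<t0+T}. F t)"
    unfolding W_def F_def woken_within_def t0_def by auto
  define q where "q = real k powr (- (1 / real b)) * exp (-1)"
  have q0: "0 \<le> q" unfolding q_def by simp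
  have Fb: "measure_pmf.prob P (F t) \<le> 1 - q" if t: "t \<in> {t0..<t0+T}" for t
  proof -
    define Act where "Act = {s\<in>S. a s \<le> t}"
    define m where "m = card Act"
    have "t0 \<in> a ` S" unfolding t0_def first_act_def using fS ne by (intro Min_in) auto
    then obtain s where s: "s \<in> S" "a s = t0" by auto
    hence "s \<in> Act" using t unfolding Act_def by auto
    moreover have fA: "finite Act" unfolding Act_def using fS by simp
    ultimately have m1: "1 \<le> m" unfolding m_def by (metis One_nat_def Suc_leI card_gt_0_iff empty_iff)
    have "m \<le> card S" unfolding m_def Act_def using fS by (intro card_mono) auto
    hence mk: "m \<le> k" using cardk by simp
    obtain \<beta> where bb: "\<beta> \<in> {1..b}" and pb1: "real k powr (- real \<beta> / real b) \<le> 1 / real m"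
      and pb2: "real k powr (- (1 / real b)) \<le> real m * real k powr (- real \<beta> / real b)"
      using choose_beta[OF k1 b1 m1 mk] by blast
    define p where "p = cs_prob k b \<beta>"
    have pp: "p = real k powr (- real \<beta> / real b)" unfolding p_def cs_prob_def by simp
    have p0: "0 \<le> p" using pp by simp
    have tN: "t < N" using t unfolding N_def by simp
    have H: "real m * p * (1 - p) ^ (m - 1) \<le> measure_pmf.prob P {\<omega>. heard S a \<omega> t \<beta>}"
      using heard_prob[OF fS tN bb k1, of a] unfolding P_def m_def Act_def p_def by simp
    have E: "exp (-1) \<le> (1 - p) ^ (m - 1)" using pow_bound[OF p0 _ m1] pb1 pp by simp
    have "q \<le> real m * p * exp (-1)" unfolding q_def using pb2 pp
      by (intro mult_right_mono) auto
    also have "\<dots> \<le> real m * p * (1 - p) ^ (m - 1)"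
      using E p0 by (intro mult_left_mono) auto
    finally have qH: "q \<le> measure_pmf.prob P {\<omega>. heard S a \<omega> t \<beta>}" using H by linarith
    have "F t \<subseteq> UNIV - {\<omega>. heard S a \<omega> t \<beta>}" unfolding F_def using bb by auto
    hence "measure_pmf.prob P (F t) \<le> measure_pmf.prob P (UNIV - {\<omega>. heard S a \<omega> t \<beta>})"
      by (intro measure_pmf.finite_measure_mono) auto
    also have "\<dots> = 1 - measure_pmf.prob P {\<omega>. heard S a \<omega> t \<beta>}"
      using measure_pmf.finite_measure_compl[of "{\<omega>. heard S a \<omega> t \<beta>}" P]
      by (simp add: measure_pmf.prob_space)
    finally show ?thesis using qH by linarith
  qed
  have q1: "q \<le> 1"
  proof (cases "T = 0")
    case True
    have "0 < ln (1 / \<epsilon>)" using e0 e1 by simp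
    moreover have "0 < exp 1 * real k powr (1 / real b)" using kpos by simp
    ultimately have "0 < exp 1 * real k powr (1 / real b) * ln (1 / \<epsilon>)" by simp
    with hT True show ?thesis by simp
  next
    case False
    hence "t0 \<in> {t0..<t0+T}" by simp
    from Fb[OF this] show ?thesis using measure_nonneg[of "measure_pmf P" "F t0"] by linarith
  qed
  define G where "G t = S \<times> {t} \<times> {1..b}" for t :: nat
  have indep: "measure_pmf.prob P (\<Inter>t\<in>{t0..<t0+T}. F t) = (\<Prod>t\<in>{t0..<t0+T}. measure_pmf.prob P (F t))"
    unfolding PI
  proof (rule indep_groups[OF fI, where G = G])
    show "finite {t0..<t0 + T}" by simp
    show "G j \<subseteq> I" if "j \<in> {t0..<t0 + T}" for j
      using that unfolding G_def I_def N_def by auto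
    show "G i \<inter> G j = {}" if "i \<noteq> j" for i j using that unfolding G_def by auto
    show "dep (F j) (G j)" for j
      unfolding dep_def
    proof (intro allI impI)
      fix f g :: "nat \<times> nat \<times> nat \<Rightarrow> bool" assume fg: "\<forall>x\<in>G j. f x = g x"
      have "heard S a f j \<beta> = heard S a g j \<beta>" if "\<beta> \<in> {1..b}" for \<beta>
      proof -
        have "{s \<in> S. transmits a f s j \<beta>} = {s \<in> S. transmits a g s j \<beta>}"
          using fg that unfolding transmits_def G_def by auto
        thus ?thesis unfolding heard_def by simp
      qed
      thus "f \<in> F j \<longleftrightarrow> g \<in> F j" unfolding F_def by auto
    qed
  qed
  have "(\<Prod>t\<in>{t0..<t0+T}. measure_pmf.prob P (F t)) \<le> (\<Prod>t\<in>{t0..<t0+T}. 1 - q)"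
    using Fb by (intro prod_mono) auto
  also have "\<dots> = (1 - q) ^ T" by simp
  also have "\<dots> \<le> exp (- q) ^ T"
    using q1 by (intro power_mono) (auto simp: exp_ge_add_one_self[of "-q", simplified])
  also have "\<dots> = exp (real T * (- q))" by (rule exp_of_nat_mult[symmetric])
  also have "\<dots> \<le> exp (- ln (1 / \<epsilon>))"
  proof -
    have h1: "q * (exp 1 * real k powr (1 / real b) * ln (1 / \<epsilon>)) \<le> q * real T"
      using hT q0 by (intro mult_left_mono) auto
    have e2: "q * (exp 1 * real k powr (1 / real b) * ln (1 / \<epsilon>)) =
        (real k powr (- (1 / real b)) * real k powr (1 / real b)) * (exp (-1) * exp 1) * ln (1 / \<epsilon>)"
      unfolding q_def by (simp add: algebra_simps)
    have e3: "real k powr (- (1 / real b)) * real k powr (1 / real b) = 1"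
      using kpos by (simp add: powr_add[symmetric])
    have e4: "exp (-1) * exp 1 = (1::real)" by (simp add: exp_add[symmetric])
    have "q * (exp 1 * real k powr (1 / real b) * ln (1 / \<epsilon>)) = ln (1 / \<epsilon>)"
      using e2 unfolding e3 e4 by simp
    with h1 have "ln (1 / \<epsilon>) \<le> q * real T" by linarith
    hence "- (real T * q) \<le> - ln (1 / \<epsilon>)" by (simp add: mult.commute)
    thus ?thesis by simp
  qed
  also have "\<dots> = \<epsilon>" using e0 by (simp add: ln_div)
  finally have "measure_pmf.prob P (UNIV - W) \<le> \<epsilon>" using indep compl by simp
  moreover have "measure_pmf.prob P (UNIV - W) = 1 - measure_pmf.prob P W"
    using measure_pmf.finite_measure_compl[of W P] by (simp add: measure_pmf.prob_space)
  ultimately show "1 - \<epsilon> \<le> measure_pmf.prob (coin_space S (first_act S a + T) k b) {\<omega>. woken_within S a b T \<omega>}"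
    unfolding P_def W_def N_def t0_def by simp
qed

end
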